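(* Let $q$ be a fixed positive integer, let $n$ be divisible by $q$, let $\varepsilon=\varepsilon(n)$, and let $S$ be a set of ordered $q$-tuples of distinct elements of $[n]$ with $\varepsilon^2|S|^2/n^{2q-1}\gg\log n$. Let $\sigma$ be a uniformly random permutation of $[n]$ and let $N=|S\cap V(D_\sigma)|$, where $V(D_\sigma)=\{(\sigma((i-1)q+1),\dots,\sigma(iq)):i=1,\dots,n/q\}$. Then quite surely $N=(1\pm\varepsilon)\frac{|S|}{qn^{q-1}}$.
   Context: $a_n\gg b_n$ means $a_n/b_n\to\infty$ as $n\to\infty$; $x=(1\pm a)y$ means $(1-a)y\le x\le(1+a)y$. An event sequence $\mathcal E_n$ holds quite surely if $\Pr(\mathcal E_n)=1-O(n^{-K})$ for every positive constant $K$. *)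

theory Defs
  imports "HOL-Probability.Probability" "HOL-Combinatorics.Permutations"
    "HOL-Library.Landau_Symbols"
begin

definition block_tuples :: "nat \<Rightarrow> nat \<Rightarrow> (nat \<Rightarrow> nat) \<Rightarrow> nat list set" where
  "block_tuples q n \<sigma> = {map \<sigma> [(i - 1) * q + 1 ..< i * q + 1] | i. i \<in> {1..n div q}}"

definition unif_perm :: "nat \<Rightarrow> (nat \<Rightarrow> nat) pmf" where
  "unif_perm n = pmf_of_set {\<sigma>. \<sigma> permutes {1..n}}"

end

theory Submission
  imports Defs
begin
definition EE :: "nat set \<Rightarrow> nat set \<Rightarrow> (nat \<Rightarrow> nat) set" where
  "EE P A = {\<sigma>. bij_betw \<sigma> P A \<and> (\<forall>x. x \<notin> P \<longrightarrow> \<sigma> x = x)}"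

definition sw :: "nat \<Rightarrow> nat \<Rightarrow> nat \<Rightarrow> nat" where
  "sw a b x = (if x = a then b else if x = b then a else x)"

definition vsw :: "nat set \<Rightarrow> nat \<Rightarrow> nat \<Rightarrow> (nat \<Rightarrow> nat) \<Rightarrow> (nat \<Rightarrow> nat)" where
  "vsw P a b \<sigma> = (\<lambda>x. if x \<in> P then sw a b (\<sigma> x) else x)"

definition avg :: "'a set \<Rightarrow> ('a \<Rightarrow> real) \<Rightarrow> real" where
  "avg X h = (\<Sum>x\<in>X. h x) / real (card X)"

lemma finite_EE: assumes "finite P" "finite A" shows "finite (EE P A)"
proof -
  have "EE P A \<subseteq> (\<lambda>g x. if x \<in> P then g x else x) ` (P \<rightarrow>\<^sub>E A)"
  proof
    fix \<sigma> assume s: "\<sigma> \<in> EE P A"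
    let ?g = "restrict \<sigma> P"
    have "?g \<in> P \<rightarrow>\<^sub>E A" using s unfolding EE_def bij_betw_def by auto
    moreover have "\<sigma> = (\<lambda>x. if x \<in> P then ?g x else x)" using s unfolding EE_def by auto
    ultimately show "\<sigma> \<in> (\<lambda>g x. if x \<in> P then g x else x) ` (P \<rightarrow>\<^sub>E A)" by blast
  qed
  moreover have "finite (P \<rightarrow>\<^sub>E A)" using assms by (simp add: finite_PiE)
  ultimately show ?thesis by (meson finite_imageI finite_subset)
qed

lemma EE_upd_mem:
  assumes "\<tau> \<in> EE (P - {p}) (A - {a})" "p \<in> P" "a \<in> A"
  shows "\<tau>(p := a) \<in> EE P A"
proof -
  have b: "bij_betw \<tau> (P - {p}) (A - {a})" and o: "\<forall>x. x \<notin> P - {p} \<longrightarrow> \<tau> x = x"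
    using assms unfolding EE_def by auto
  have b1: "bij_betw (\<tau>(p:=a)) (P - {p}) (A - {a})"
    using b by (rule bij_betw_cong[THEN iffD1, rotated]) auto
  have b2: "bij_betw (\<tau>(p:=a)) {p} {a}" by (simp add: bij_betw_def)
  have "bij_betw (\<tau>(p:=a)) ((P - {p}) \<union> {p}) ((A - {a}) \<union> {a})"
    by (rule bij_betw_combine[OF b1 b2]) auto
  moreover have "(P - {p}) \<union> {p} = P" "(A - {a}) \<union> {a} = A" using assms by auto
  ultimately show ?thesis using o assms unfolding EE_def by auto
qed

lemma EE_restr_mem:
  assumes "\<sigma> \<in> EE P A" "p \<in> P"
  shows "\<sigma>(p := p) \<in> EE (P - {p}) (A - {\<sigma> p})"
proof -
  have b: "bij_betw \<sigma> P A" and o: "\<forall>x. x \<notin> P \<longrightarrow> \<sigma> x = x"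
    using assms unfolding EE_def by auto
  have "bij_betw \<sigma> (P - {p}) (A - {\<sigma> p})"
    using b assms(2) by (metis bij_betw_DiffI bij_betw_singletonI empty_subsetI insert_subset bij_betw_apply)
  hence "bij_betw (\<sigma>(p:=p)) (P - {p}) (A - {\<sigma> p})"
    by (rule bij_betw_cong[THEN iffD1, rotated]) auto
  thus ?thesis using o unfolding EE_def by auto
qed

lemma EE_decomp:
  assumes "p \<in> P"
  shows "EE P A = (\<Union>a\<in>A. (\<lambda>\<tau>. \<tau>(p := a)) ` EE (P - {p}) (A - {a}))"
proof
  show "EE P A \<subseteq> (\<Union>a\<in>A. (\<lambda>\<tau>. \<tau>(p := a)) ` EE (P - {p}) (A - {a}))"
  proof
    fix \<sigma> assume s: "\<sigma> \<in> EE P A"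
    have "\<sigma> p \<in> A" using s assms unfolding EE_def bij_betw_def by auto
    moreover have "\<sigma> = (\<sigma>(p:=p))(p := \<sigma> p)" by simp
    ultimately show "\<sigma> \<in> (\<Union>a\<in>A. (\<lambda>\<tau>. \<tau>(p := a)) ` EE (P - {p}) (A - {a}))"
      using EE_restr_mem[OF s assms] by blast
  qed
qed (use EE_upd_mem assms in auto)

lemma EE_out: "\<tau> \<in> EE Q B \<Longrightarrow> x \<notin> Q \<Longrightarrow> \<tau> x = x" unfolding EE_def by auto

lemma sum_EE_decomp:
  assumes "p \<in> P" "finite P" "finite A"
  shows "(\<Sum>\<sigma>\<in>EE P A. h \<sigma>) = (\<Sum>a\<in>A. \<Sum>\<tau>\<in>EE (P - {p}) (A - {a}). h (\<tau>(p := a)))"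
proof -
  have "(\<Sum>\<sigma>\<in>EE P A. h \<sigma>) = (\<Sum>a\<in>A. \<Sum>\<sigma>\<in>(\<lambda>\<tau>. \<tau>(p := a)) ` EE (P - {p}) (A - {a}). h \<sigma>)"
    unfolding EE_decomp[OF assms(1)]
  proof (rule sum.UNION_disjoint)
    show "\<forall>i\<in>A. finite ((\<lambda>\<tau>. \<tau>(p := i)) ` EE (P - {p}) (A - {i}))"
      using finite_EE assms by auto
    show "\<forall>i\<in>A. \<forall>j\<in>A. i \<noteq> j \<longrightarrow> (\<lambda>\<tau>. \<tau>(p := i)) ` EE (P - {p}) (A - {i}) \<inter>
          (\<lambda>\<tau>. \<tau>(p := j)) ` EE (P - {p}) (A - {j}) = {}"
      by (auto dest: fun_cong[where x = p])
  qed fact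
  also have "\<dots> = (\<Sum>a\<in>A. \<Sum>\<tau>\<in>EE (P - {p}) (A - {a}). h (\<tau>(p := a)))"
  proof (rule sum.cong[OF refl], rule sum.reindex_cong[OF _ refl refl])
    fix a show "inj_on (\<lambda>\<tau>. \<tau>(p := a)) (EE (P - {p}) (A - {a}))"
    proof (rule inj_onI)
      fix x y assume "x \<in> EE (P - {p}) (A - {a})" "y \<in> EE (P - {p}) (A - {a})" "x(p := a) = y(p := a)"
      thus "x = y" using EE_out[of x "P-{p}" _ p] EE_out[of y "P-{p}" _ p]
        by (metis fun_upd_idem_iff fun_upd_upd Diff_iff insertI1)
    qed
  qed
  finally show ?thesis .
qed

lemma card_EE:
  assumes "finite P" "finite A" "card P = card A"
  shows "card (EE P A) = fact (card P)"
  using assms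
proof (induction "card P" arbitrary: P A)
  case 0
  hence "P = {}" "A = {}" by auto
  moreover have "EE {} {} = {id}" unfolding EE_def by (auto simp: bij_betw_def)
  ultimately show ?case by simp
next
  case (Suc m)
  then obtain p where p: "p \<in> P" by fastforce
  have "card (EE P A) = (\<Sum>\<sigma>\<in>EE P A. 1)" by simp
  also have "\<dots> = (\<Sum>a\<in>A. \<Sum>\<tau>\<in>EE (P - {p}) (A - {a}). 1)"
    by (rule sum_EE_decomp[OF p Suc.prems(1,2)])
  also have "\<dots> = (\<Sum>a\<in>A. fact m)"
  proof (rule sum.cong[OF refl])
    fix a assume a: "a \<in> A"
    have c: "card (EE (P - {p}) (A - {a})) = fact (card (P - {p}))"
      using Suc.hyps(1)[of "P - {p}" "A - {a}"] Suc.prems Suc.hyps(2) p a by auto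
    have "card (P - {p}) = m" using Suc.hyps(2) p Suc.prems(1) by simp
    thus "(\<Sum>\<tau>\<in>EE (P - {p}) (A - {a}). 1) = fact m" using c by simp
  qed
  also have "\<dots> = fact (card P)" using Suc.hyps(2) Suc.prems(3)
  proof -
    have cA: "card A = Suc m" using Suc.hyps(2) Suc.prems(3) by simp
    have cP: "card P = Suc m" using Suc.hyps(2) by simp
    show ?thesis unfolding cP using cA by simp
  qed
  finally show ?case .
qed

lemma sw_sw[simp]: "sw a b (sw a b x) = x" unfolding sw_def by auto

lemma inj_sw: "inj (sw a b)" by (metis injI sw_sw)

lemma sw_image: "a \<in> A \<Longrightarrow> b \<in> A \<Longrightarrow> sw a b ` (A - {a}) = A - {b}"
  unfolding sw_def by (auto simp: image_iff)

lemma vsw_EE: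
  assumes "\<tau> \<in> EE Q B"
  shows "vsw Q a b \<tau> \<in> EE Q (sw a b ` B)"
proof -
  have b: "bij_betw \<tau> Q B" using assms unfolding EE_def by auto
  have "bij_betw (sw a b \<circ> \<tau>) Q (sw a b ` B)"
    by (rule bij_betw_trans[OF b]) (meson inj_sw inj_on_imp_bij_betw inj_on_subset subset_UNIV)
  hence "bij_betw (vsw Q a b \<tau>) Q (sw a b ` B)"
    by (rule bij_betw_cong[THEN iffD1, rotated]) (auto simp: vsw_def)
  thus ?thesis unfolding EE_def by (auto simp: vsw_def)
qed

lemma vsw_vsw: "\<tau> \<in> EE Q B \<Longrightarrow> vsw Q a b (vsw Q a b \<tau>) = \<tau>"
  by (rule ext) (auto simp: vsw_def EE_def)

lemma vsw_bij:
  assumes "a \<in> A" "b \<in> A"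
  shows "bij_betw (vsw Q a b) (EE Q (A - {a})) (EE Q (A - {b}))"
proof (rule bij_betw_byWitness[where f' = "vsw Q a b"])
  show "\<forall>x\<in>EE Q (A - {a}). vsw Q a b (vsw Q a b x) = x" using vsw_vsw by blast
  show "\<forall>x\<in>EE Q (A - {b}). vsw Q a b (vsw Q a b x) = x" using vsw_vsw by blast
  show "vsw Q a b ` EE Q (A - {a}) \<subseteq> EE Q (A - {b})"
    using vsw_EE[of _ Q "A - {a}" a b] sw_image[OF assms] by auto
  have "sw a b ` (A - {b}) = A - {a}"
  proof -
    have "sw a b = sw b a" unfolding sw_def by auto
    thus ?thesis using sw_image[OF assms(2,1)] by simp
  qed
  thus "vsw Q a b ` EE Q (A - {b}) \<subseteq> EE Q (A - {a})"
    using vsw_EE[of _ Q "A - {b}" a b] by auto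
qed

lemma vsw_upd:
  assumes "\<tau> \<in> EE (P - {p}) B" "p \<in> P"
  shows "(vsw (P - {p}) a b \<tau>)(p := b) = vsw P a b (\<tau>(p := a))"
  using assms by (auto simp: vsw_def sw_def EE_def)

lemma vsw_upd2:
  assumes "\<tau> \<in> EE (P - {p}) B" "p \<in> P" "a' \<noteq> a" "b' \<noteq> a"
  shows "(vsw (P - {p}) a' b' \<tau>)(p := a) = vsw P a' b' (\<tau>(p := a))"
  using assms by (auto simp: vsw_def sw_def EE_def)

lemma avg_mono: "(\<And>x. x \<in> X \<Longrightarrow> h x \<le> h' x) \<Longrightarrow> avg X h \<le> avg X h'"
  unfolding avg_def by (intro divide_right_mono sum_mono) auto

lemma avg_cmult: "avg X (\<lambda>x. C * h x) = C * avg X h"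
  unfolding avg_def by (simp add: sum_distrib_left)

lemma avg_decomp:
  assumes "p \<in> P" "finite P" "finite A" "card P = card A"
  shows "avg (EE P A) h = avg A (\<lambda>a. avg (EE (P - {p}) (A - {a})) (\<lambda>\<tau>. h (\<tau>(p := a))))"
proof -
  obtain m where cP: "card P = Suc m" using assms by (metis card_0_eq empty_iff not0_implies_Suc)
  have cA: "card A = Suc m" using cP assms by simp
  have ci: "card (EE (P - {p}) (A - {a})) = fact m" if "a \<in> A" for a
    using card_EE[of "P - {p}" "A - {a}"] assms that cP cA by simp
  have "avg (EE P A) h = (\<Sum>a\<in>A. \<Sum>\<tau>\<in>EE (P - {p}) (A - {a}). h (\<tau>(p := a))) / (Suc m * fact m)"
    unfolding avg_def sum_EE_decomp[OF assms(1-3)] card_EE[OF assms(2-4)] cP by simp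
  also have "\<dots> = (\<Sum>a\<in>A. (\<Sum>\<tau>\<in>EE (P - {p}) (A - {a}). h (\<tau>(p := a))) / fact m) / Suc m"
    by (simp add: sum_divide_distrib field_simps)
  also have "\<dots> = avg A (\<lambda>a. avg (EE (P - {p}) (A - {a})) (\<lambda>\<tau>. h (\<tau>(p := a))))"
    unfolding avg_def cA using ci by simp
  finally show ?thesis .
qed

lemma hoeff_avg:
  fixes g :: "nat \<Rightarrow> real"
  assumes A: "finite A" "A \<noteq> {}" and l: "l > 0" and gc: "\<forall>a\<in>A. \<forall>b\<in>A. \<bar>g a - g b\<bar> \<le> c"
  shows "avg A (\<lambda>a. exp (l * (g a - avg A g))) \<le> exp (l^2 * c^2 / 8)"
proof -
  define lo where "lo = Min (g ` A)"
  have lo: "\<forall>a\<in>A. g a \<in> {lo..lo + c}"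
  proof
    fix a assume a: "a \<in> A"
    have "lo \<in> g ` A" unfolding lo_def using A by auto
    then obtain b where b: "b \<in> A" "lo = g b" by auto
    have "lo \<le> g a" unfolding lo_def using A a by auto
    moreover have "g a \<le> lo + c" using gc a b by force
    ultimately show "g a \<in> {lo..lo + c}" by auto
  qed
  interpret H: interval_bounded_random_variable "measure_pmf (pmf_of_set A)" g lo "lo + c"
    by unfold_locales (use lo A in \<open>auto simp: AE_measure_pmf_iff\<close>)
  have ex: "measure_pmf.expectation (pmf_of_set A) g = avg A g"
    unfolding avg_def using A by (simp add: integral_pmf_of_set)
  have "nn_integral (measure_pmf (pmf_of_set A)) (\<lambda>x. ennreal (exp (l * (g x - avg A g))))
        \<le> ennreal (exp (l\<^sup>2 * (lo + c - lo)\<^sup>2 / 8))"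
    using H.Hoeffdings_lemma_nn_integral[OF l] unfolding ex by simp
  moreover have "nn_integral (measure_pmf (pmf_of_set A)) (\<lambda>x. ennreal (exp (l * (g x - avg A g))))
        = ennreal (avg A (\<lambda>a. exp (l * (g a - avg A g))))"
    using A unfolding avg_def
    by (simp add: nn_integral_pmf_of_set sum_ennreal ennreal_of_nat_eq_real_of_nat, subst divide_ennreal)
       (auto intro: sum_nonneg simp: card_gt_0_iff)
  ultimately show ?thesis by simp
qed

lemma mgf:
  fixes f :: "(nat \<Rightarrow> nat) \<Rightarrow> real" and c l :: real
  assumes "finite P" "finite A" "card P = card A" "l > 0"
    and "\<forall>\<sigma>\<in>EE P A. \<forall>a\<in>A. \<forall>b\<in>A. \<bar>f (vsw P a b \<sigma>) - f \<sigma>\<bar> \<le> c"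
  shows "avg (EE P A) (\<lambda>\<sigma>. exp (l * (f \<sigma> - avg (EE P A) f))) \<le> exp (l^2 * c^2 * card P / 8)"
  using assms
proof (induction "card P" arbitrary: P A f)
  case 0
  hence "P = {}" "A = {}" by auto
  moreover have "EE {} {} = {id}" unfolding EE_def by (auto simp: bij_betw_def)
  ultimately show ?case by (simp add: avg_def)
next
  case (Suc m)
  then obtain p where p: "p \<in> P" by fastforce
  have cA: "card A = Suc m" using Suc.hyps(2) Suc.prems(3) by simp
  have Ane: "A \<noteq> {}" using cA by auto
  define Ea where "Ea a = EE (P - {p}) (A - {a})" for a
  define g where "g a = avg (Ea a) (\<lambda>\<tau>. f (\<tau>(p := a)))" for a
  define \<mu> where "\<mu> = avg (EE P A) f"
  have ci: "card (Ea a) = fact m" if "a \<in> A" for a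
  proof -
    have "card (P - {p}) = m" "card (A - {a}) = m" using Suc.hyps(2) p cA that Suc.prems(1,2) by auto
    thus ?thesis using card_EE[of "P - {p}" "A - {a}"] Suc.prems(1,2) unfolding Ea_def by simp
  qed
  have fin: "finite (Ea a)" for a unfolding Ea_def using finite_EE Suc.prems by auto
  have mu: "\<mu> = avg A g" unfolding \<mu>_def g_def Ea_def by (rule avg_decomp[OF p Suc.prems(1-3)])
  have IH: "avg (Ea a) (\<lambda>\<tau>. exp (l * (f (\<tau>(p := a)) - g a))) \<le> exp (l^2 * c^2 * m / 8)"
    if a: "a \<in> A" for a
  proof -
    have "avg (EE (P - {p}) (A - {a})) (\<lambda>\<tau>. exp (l * (f (\<tau>(p := a)) - avg (EE (P - {p}) (A - {a})) (\<lambda>\<tau>. f (\<tau>(p := a))))))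
        \<le> exp (l^2 * c^2 * card (P - {p}) / 8)"
    proof (rule Suc.hyps(1))
      show "m = card (P - {p})" using Suc.hyps(2) p by simp
      show "card (P - {p}) = card (A - {a})" using Suc.prems(3) p a Suc.prems(1,2) by simp
      show "\<forall>\<sigma>\<in>EE (P - {p}) (A - {a}). \<forall>a'\<in>A - {a}. \<forall>b'\<in>A - {a}.
          \<bar>f ((vsw (P - {p}) a' b' \<sigma>)(p := a)) - f (\<sigma>(p := a))\<bar> \<le> c"
      proof (intro ballI)
        fix \<sigma> a' b' assume s: "\<sigma> \<in> EE (P - {p}) (A - {a})" and a': "a' \<in> A - {a}" and b': "b' \<in> A - {a}"
        have "(vsw (P - {p}) a' b' \<sigma>)(p := a) = vsw P a' b' (\<sigma>(p := a))"
          using vsw_upd2[OF s p] a' b' by auto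
        moreover have "\<sigma>(p := a) \<in> EE P A" using EE_upd_mem[OF s p a] .
        ultimately show "\<bar>f ((vsw (P - {p}) a' b' \<sigma>)(p := a)) - f (\<sigma>(p := a))\<bar> \<le> c"
          using Suc.prems(5) a' b' by auto
      qed
    qed (use Suc.prems a in auto)
    moreover have "card (P - {p}) = m" using Suc.hyps(2) p by simp
    ultimately show ?thesis unfolding g_def Ea_def by simp
  qed
  have gc: "\<forall>a\<in>A. \<forall>b\<in>A. \<bar>g a - g b\<bar> \<le> c"
  proof (intro ballI)
    have *: "\<bar>g b - g a\<bar> \<le> c" if a: "a \<in> A" and b: "b \<in> A" for a b
    proof -
      have "(\<Sum>\<tau>\<in>Ea b. f (\<tau>(p := b))) = (\<Sum>\<tau>\<in>Ea a. f ((vsw (P - {p}) a b \<tau>)(p := b)))"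
        unfolding Ea_def by (rule sum.reindex_bij_betw[symmetric, OF vsw_bij[OF a b]])
      also have "\<dots> = (\<Sum>\<tau>\<in>Ea a. f (vsw P a b (\<tau>(p := a))))"
        by (rule sum.cong[OF refl]) (simp add: vsw_upd[OF _ p] Ea_def)
      finally have sb: "(\<Sum>\<tau>\<in>Ea b. f (\<tau>(p := b))) = (\<Sum>\<tau>\<in>Ea a. f (vsw P a b (\<tau>(p := a))))" .
      have gba: "g b - g a = (\<Sum>\<tau>\<in>Ea a. f (vsw P a b (\<tau>(p := a))) - f (\<tau>(p := a))) / fact m"
        unfolding g_def avg_def ci[OF a] ci[OF b] sb by (simp add: sum_subtractf diff_divide_distrib)
      have bnd: "\<bar>f (vsw P a b (\<tau>(p := a))) - f (\<tau>(p := a))\<bar> \<le> c" if "\<tau> \<in> Ea a" for \<tau>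
      proof -
        have "\<tau>(p:=a) \<in> EE P A" using EE_upd_mem[OF _ p a] that unfolding Ea_def by blast
        thus ?thesis by (rule Suc.prems(5)[rule_format, OF _ a b])
      qed
      have "\<bar>\<Sum>\<tau>\<in>Ea a. f (vsw P a b (\<tau>(p := a))) - f (\<tau>(p := a))\<bar> \<le> (\<Sum>\<tau>\<in>Ea a. c)"
        by (rule order.trans[OF sum_abs], rule sum_mono, rule bnd)
      moreover have "(\<Sum>\<tau>\<in>Ea a. c) = fact m * c" using ci[OF a] by simp
      ultimately have "\<bar>\<Sum>\<tau>\<in>Ea a. f (vsw P a b (\<tau>(p := a))) - f (\<tau>(p := a))\<bar> / fact m \<le> c"
        by (subst pos_divide_le_eq) (simp_all add: mult.commute ci[OF a])
      thus ?thesis using gba by simp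
    qed
    fix a b assume "a \<in> A" "b \<in> A" thus "\<bar>g a - g b\<bar> \<le> c" using *[of b a] by simp
  qed
  have "avg (EE P A) (\<lambda>\<sigma>. exp (l * (f \<sigma> - \<mu>)))
      = avg A (\<lambda>a. avg (Ea a) (\<lambda>\<tau>. exp (l * (f (\<tau>(p := a)) - \<mu>))))"
    unfolding Ea_def by (rule avg_decomp[OF p Suc.prems(1-3)])
  also have "\<dots> = avg A (\<lambda>a. exp (l * (g a - \<mu>)) * avg (Ea a) (\<lambda>\<tau>. exp (l * (f (\<tau>(p := a)) - g a))))"
  proof -
    have "exp (l * (f (\<tau>(p := a)) - \<mu>)) = exp (l * (g a - \<mu>)) * exp (l * (f (\<tau>(p := a)) - g a))" for a \<tau>
      by (simp add: exp_add[symmetric] algebra_simps)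
    thus ?thesis by (simp add: avg_cmult)
  qed
  also have "\<dots> \<le> avg A (\<lambda>a. exp (l * (g a - \<mu>)) * exp (l^2 * c^2 * m / 8))"
    by (rule avg_mono, rule mult_left_mono[OF IH]) auto
  also have "\<dots> = exp (l^2 * c^2 * m / 8) * avg A (\<lambda>a. exp (l * (g a - avg A g)))"
    unfolding mu avg_def by (simp add: sum_distrib_right mult.commute)
  also have "\<dots> \<le> exp (l^2 * c^2 * m / 8) * exp (l^2 * c^2 / 8)"
    by (rule mult_left_mono[OF hoeff_avg[OF Suc.prems(2) Ane Suc.prems(4) gc]]) auto
  also have "\<dots> = exp (l^2 * c^2 * card P / 8)"
    by (simp add: exp_add[symmetric] Suc.hyps(2)[symmetric] algebra_simps add_divide_distrib)
  finally show ?case unfolding \<mu>_def .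
qed

lemma tail_upper:
  fixes f :: "(nat \<Rightarrow> nat) \<Rightarrow> real" and c t :: real
  assumes fin: "finite P" "finite A" "card P = card A" and n: "card P > 0" and c: "c > 0" and t: "t > 0"
    and bd: "\<forall>\<sigma>\<in>EE P A. \<forall>a\<in>A. \<forall>b\<in>A. \<bar>f (vsw P a b \<sigma>) - f \<sigma>\<bar> \<le> c"
  shows "real (card {\<sigma>\<in>EE P A. f \<sigma> - avg (EE P A) f \<ge> t}) / real (card (EE P A))
          \<le> exp (- 2 * t^2 / (c^2 * card P))"
proof -
  define \<mu> where "\<mu> = avg (EE P A) f"
  define l where "l = 4 * t / (c^2 * card P)"
  have l: "l > 0" unfolding l_def using c t n by auto
  have fE: "finite (EE P A)" using finite_EE fin by auto
  have "real (card {\<sigma>\<in>EE P A. f \<sigma> - \<mu> \<ge> t}) = (\<Sum>\<sigma>\<in>{\<sigma>\<in>EE P A. f \<sigma> - \<mu> \<ge> t}. 1)"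
    by simp
  also have "\<dots> = (\<Sum>\<sigma>\<in>EE P A. if f \<sigma> - \<mu> \<ge> t then 1 else 0)"
    by (rule sum.inter_filter[OF fE])
  also have "\<dots> \<le> (\<Sum>\<sigma>\<in>EE P A. exp (- (l * t)) * exp (l * (f \<sigma> - \<mu>)))"
  proof (rule sum_mono)
    fix \<sigma>
    have "exp (- (l * t)) * exp (l * (f \<sigma> - \<mu>)) = exp (l * (f \<sigma> - \<mu> - t))"
      by (simp add: exp_add[symmetric] algebra_simps)
    moreover have "f \<sigma> - \<mu> \<ge> t \<Longrightarrow> 1 \<le> exp (l * (f \<sigma> - \<mu> - t))"
      using l by simp
    ultimately show "(if f \<sigma> - \<mu> \<ge> t then 1 else 0) \<le> exp (- (l * t)) * exp (l * (f \<sigma> - \<mu>))"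
      by auto
  qed
  also have "\<dots> = exp (- (l * t)) * (\<Sum>\<sigma>\<in>EE P A. exp (l * (f \<sigma> - \<mu>)))"
    by (simp add: sum_distrib_left)
  finally have "real (card {\<sigma>\<in>EE P A. f \<sigma> - \<mu> \<ge> t}) / real (card (EE P A))
       \<le> exp (- (l * t)) * (\<Sum>\<sigma>\<in>EE P A. exp (l * (f \<sigma> - \<mu>))) / real (card (EE P A))"
    by (rule divide_right_mono) simp
  also have "\<dots> = exp (- (l * t)) * avg (EE P A) (\<lambda>\<sigma>. exp (l * (f \<sigma> - \<mu>)))"
    unfolding avg_def by simp
  also have "\<dots> \<le> exp (- (l * t)) * exp (l^2 * c^2 * card P / 8)"
    by (rule mult_left_mono) (use mgf[OF fin l bd] in \<open>auto simp: \<mu>_def\<close>)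
  also have "\<dots> = exp (- 2 * t^2 / (c^2 * card P))"
  proof -
    have e1: "l^2 * c^2 * card P = 4 * (l * t)"
      unfolding power2_eq_square l_def using c n by (simp add: field_simps)
    have e2: "l * t = 4 * t^2 / (c^2 * card P)"
      unfolding power2_eq_square l_def by simp
    have "- (l * t) + l^2 * c^2 * card P / 8 = - 2 * t^2 / (c^2 * card P)"
      unfolding e1 using e2 by simp
    thus ?thesis by (simp add: exp_add[symmetric])
  qed
  finally show ?thesis unfolding \<mu>_def .
qed

lemma tail_two:
  fixes f :: "(nat \<Rightarrow> nat) \<Rightarrow> real" and c t :: real
  assumes fin: "finite P" "finite A" "card P = card A" and n: "card P > 0" and c: "c > 0" and t: "t > 0"
    and bd: "\<forall>\<sigma>\<in>EE P A. \<forall>a\<in>A. \<forall>b\<in>A. \<bar>f (vsw P a b \<sigma>) - f \<sigma>\<bar> \<le> c"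
  shows "real (card {\<sigma>\<in>EE P A. \<bar>f \<sigma> - avg (EE P A) f\<bar> \<ge> t}) / real (card (EE P A))
          \<le> 2 * exp (- 2 * t^2 / (c^2 * card P))"
proof -
  define g where "g \<sigma> = - f \<sigma>" for \<sigma>
  have bdg: "\<forall>\<sigma>\<in>EE P A. \<forall>a\<in>A. \<forall>b\<in>A. \<bar>g (vsw P a b \<sigma>) - g \<sigma>\<bar> \<le> c"
  proof (intro ballI)
    fix \<sigma> a b assume "\<sigma> \<in> EE P A" "a \<in> A" "b \<in> A"
    hence "\<bar>f (vsw P a b \<sigma>) - f \<sigma>\<bar> \<le> c" using bd by blast
    moreover have "\<bar>g (vsw P a b \<sigma>) - g \<sigma>\<bar> = \<bar>f (vsw P a b \<sigma>) - f \<sigma>\<bar>"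
      unfolding g_def by linarith
    ultimately show "\<bar>g (vsw P a b \<sigma>) - g \<sigma>\<bar> \<le> c" by simp
  qed
  have ag: "avg (EE P A) g = - avg (EE P A) f" unfolding avg_def g_def by (simp add: sum_negf)
  have fE: "finite (EE P A)" using finite_EE fin by auto
  have "{\<sigma>\<in>EE P A. \<bar>f \<sigma> - avg (EE P A) f\<bar> \<ge> t} \<subseteq>
        {\<sigma>\<in>EE P A. f \<sigma> - avg (EE P A) f \<ge> t} \<union> {\<sigma>\<in>EE P A. g \<sigma> - avg (EE P A) g \<ge> t}"
    unfolding ag unfolding g_def by auto
  note sub = this
  have "card {\<sigma>\<in>EE P A. \<bar>f \<sigma> - avg (EE P A) f\<bar> \<ge> t} \<le>
        card {\<sigma>\<in>EE P A. f \<sigma> - avg (EE P A) f \<ge> t} + card {\<sigma>\<in>EE P A. g \<sigma> - avg (EE P A) g \<ge> t}"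
    by (rule order_trans[OF card_mono[OF _ sub] card_Un_le]) (use fE in auto)
  hence "real (card {\<sigma>\<in>EE P A. \<bar>f \<sigma> - avg (EE P A) f\<bar> \<ge> t}) / real (card (EE P A)) \<le>
        real (card {\<sigma>\<in>EE P A. f \<sigma> - avg (EE P A) f \<ge> t}) / real (card (EE P A)) +
        real (card {\<sigma>\<in>EE P A. g \<sigma> - avg (EE P A) g \<ge> t}) / real (card (EE P A))"
    by (simp add: add_divide_distrib[symmetric] divide_right_mono)
  also have "\<dots> \<le> exp (- 2 * t^2 / (c^2 * card P)) + exp (- 2 * t^2 / (c^2 * card P))"
    by (intro add_mono tail_upper[OF fin n c t bd] tail_upper[OF fin n c t bdg])
  finally show ?thesis by simp
qed

lemma count_fix:
  assumes "finite P" "finite A" "card P = card A" "distinct ps" "set ps \<subseteq> P"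
    "distinct s" "set s \<subseteq> A" "length ps = length s"
  shows "card {\<sigma>\<in>EE P A. map \<sigma> ps = s} = fact (card P - length ps)"
  using assms
proof (induction ps arbitrary: P A s)
  case Nil
  thus ?case using card_EE[OF Nil.prems(1-3)] by simp
next
  case (Cons p ps)
  then obtain a s' where s: "s = a # s'" by (cases s) auto
  have p: "p \<in> P" and a: "a \<in> A" using Cons.prems s by auto
  have pn: "p \<notin> set ps" using Cons.prems by simp
  have eq: "{\<sigma>\<in>EE P A. map \<sigma> (p # ps) = s} =
      (\<lambda>\<tau>. \<tau>(p := a)) ` {\<tau> \<in> EE (P - {p}) (A - {a}). map \<tau> ps = s'}"
  proof
    show "(\<lambda>\<tau>. \<tau>(p := a)) ` {\<tau> \<in> EE (P - {p}) (A - {a}). map \<tau> ps = s'} \<subseteq> {\<sigma>\<in>EE P A. map \<sigma> (p # ps) = s}"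
      using EE_upd_mem[OF _ p a] pn s by (auto simp: map_fun_upd)
    show "{\<sigma>\<in>EE P A. map \<sigma> (p # ps) = s} \<subseteq> (\<lambda>\<tau>. \<tau>(p := a)) ` {\<tau> \<in> EE (P - {p}) (A - {a}). map \<tau> ps = s'}"
    proof
      fix \<sigma> assume "\<sigma> \<in> {\<sigma>\<in>EE P A. map \<sigma> (p # ps) = s}"
      hence sE: "\<sigma> \<in> EE P A" and sp: "\<sigma> p = a" and sm: "map \<sigma> ps = s'" using s by auto
      have "\<sigma>(p := p) \<in> EE (P - {p}) (A - {a})" using EE_restr_mem[OF sE p] sp by simp
      moreover have "map (\<sigma>(p := p)) ps = s'" using sm pn by (simp add: map_fun_upd)
      moreover have "\<sigma> = (\<sigma>(p := p))(p := a)" using sp by auto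
      ultimately show "\<sigma> \<in> (\<lambda>\<tau>. \<tau>(p := a)) ` {\<tau> \<in> EE (P - {p}) (A - {a}). map \<tau> ps = s'}" by blast
    qed
  qed
  have inj: "inj_on (\<lambda>\<tau>. \<tau>(p := a)) {\<tau> \<in> EE (P - {p}) (A - {a}). map \<tau> ps = s'}"
  proof (rule inj_onI)
    fix x y assume "x \<in> {\<tau> \<in> EE (P - {p}) (A - {a}). map \<tau> ps = s'}"
      "y \<in> {\<tau> \<in> EE (P - {p}) (A - {a}). map \<tau> ps = s'}" "x(p := a) = y(p := a)"
    thus "x = y" using EE_out[of x "P-{p}" _ p] EE_out[of y "P-{p}" _ p]
      by (metis (no_types, lifting) fun_upd_idem_iff fun_upd_upd Diff_iff insertI1 mem_Collect_eq)
  qed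
  have "card {\<tau> \<in> EE (P - {p}) (A - {a}). map \<tau> ps = s'} = fact (card (P - {p}) - length ps)"
    using Cons.prems s p a by (intro Cons.IH) auto
  thus ?case unfolding eq card_image[OF inj] using p Cons.prems(1) by simp
qed

lemma sum_sparse:
  fixes d :: "nat \<Rightarrow> real"
  assumes "finite I" "\<forall>i\<in>I. \<bar>d i\<bar> \<le> 1" "\<forall>i\<in>I. d i \<noteq> 0 \<longrightarrow> i \<in> {x, y}"
  shows "\<bar>\<Sum>i\<in>I. d i\<bar> \<le> 2"
proof -
  have "(\<Sum>i\<in>I. d i) = (\<Sum>i\<in>I \<inter> {x, y}. d i)"
    by (rule sum.mono_neutral_right) (use assms in auto)
  also have "\<bar>\<dots>\<bar> \<le> (\<Sum>i\<in>I \<inter> {x, y}. \<bar>d i\<bar>)" by (rule sum_abs)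
  also have "\<dots> \<le> (\<Sum>i\<in>I \<inter> {x, y}. 1)" by (rule sum_mono) (use assms in auto)
  also have "\<dots> = card (I \<inter> {x, y})" by simp
  also have "\<dots> \<le> card {x, y}" by (intro of_nat_mono card_mono) auto
  also have "\<dots> \<le> 2" by (simp add: card_insert_le_m1)
  finally show ?thesis .
qed

definition Bl :: "nat \<Rightarrow> nat \<Rightarrow> nat list" where
  "Bl q i = [(i - 1) * q + 1 ..< i * q + 1]"

lemma Bl_blk:
  assumes "q \<ge> 1" "i \<ge> 1" "k \<in> set (Bl q i)"
  shows "(k - 1) div q + 1 = i"
proof -
  have "(i - 1) * q \<le> k - 1" "k - 1 < Suc (i - 1) * q" using assms unfolding Bl_def by auto
  hence "(k - 1) div q = i - 1" by (simp add: div_nat_eqI mult.commute)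
  thus ?thesis using assms by simp
qed

lemma Bl_sub:
  assumes a: "q \<ge> 1" "i \<ge> 1" "i \<le> m"
  shows "set (Bl q i) \<subseteq> {1..q * m}"
proof
  fix x assume x: "x \<in> set (Bl q i)"
  have "i * q \<le> q * m" using mult_le_mono1[OF a(3), of q] by (simp add: mult.commute)
  moreover have "x < i * q + 1" "1 \<le> x" using x a unfolding Bl_def by auto
  ultimately have "x \<le> q * m" "1 \<le> x" by linarith+
  thus "x \<in> {1..q * m}" by simp
qed

lemma Bl_len: "i \<ge> 1 \<Longrightarrow> length (Bl q i) = q"
  by (cases i) (auto simp: Bl_def)

lemma Bl_hd:
  assumes "q \<ge> 1" "i \<ge> 1" shows "hd (Bl q i) = (i - 1) * q + 1"
proof -
  have lt: "(i - 1) * q + 1 < i * q + 1" using assms by (cases i) auto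
  show ?thesis unfolding Bl_def by (subst upt_conv_Cons[OF lt]) simp
qed

definition Nr :: "nat list set \<Rightarrow> nat \<Rightarrow> nat \<Rightarrow> (nat \<Rightarrow> nat) \<Rightarrow> real" where
  "Nr S q m \<sigma> = (\<Sum>i\<in>{1..m}. if map \<sigma> (Bl q i) \<in> S then 1 else 0)"

lemma N_eq:
  assumes q: "q \<ge> 1" and s: "\<sigma> \<in> EE {1..q*m} {1..q*m}"
  shows "real (card (S \<inter> block_tuples q (q*m) \<sigma>)) = Nr S q m \<sigma>"
proof -
  define h where "h i = map \<sigma> (Bl q i)" for i
  have bt: "block_tuples q (q*m) \<sigma> = h ` {1..m}"
    unfolding block_tuples_def h_def Bl_def using q by auto
  have inj: "inj_on h {1..m}"
  proof (rule inj_onI)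
    fix i j assume i: "i \<in> {1..m}" and j: "j \<in> {1..m}" and e: "h i = h j"
    have ne: "Bl q i \<noteq> []" "Bl q j \<noteq> []" using Bl_len[of i q] Bl_len[of j q] i j q by auto
    have "hd (h i) = \<sigma> ((i - 1) * q + 1)" "hd (h j) = \<sigma> ((j - 1) * q + 1)"
      unfolding h_def using ne Bl_hd[OF q] i j by (auto simp: hd_map)
    hence "\<sigma> ((i - 1) * q + 1) = \<sigma> ((j - 1) * q + 1)" using e by simp
    moreover have "hd (Bl q i) \<in> {1..q*m}" "hd (Bl q j) \<in> {1..q*m}"
      using Bl_sub[OF q, of i m] Bl_sub[OF q, of j m] i j hd_in_set[OF ne(1)] hd_in_set[OF ne(2)]
      by auto
    hence "(i - 1) * q + 1 \<in> {1..q*m}" "(j - 1) * q + 1 \<in> {1..q*m}"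
      using Bl_hd[OF q] i j by auto
    moreover have "inj_on \<sigma> {1..q*m}" using s unfolding EE_def bij_betw_def by auto
    ultimately have "(i - 1) * q + 1 = (j - 1) * q + 1" by (meson inj_onD)
    thus "i = j" using q i j by auto
  qed
  have "S \<inter> h ` {1..m} = h ` {i\<in>{1..m}. h i \<in> S}" by auto
  hence "card (S \<inter> block_tuples q (q*m) \<sigma>) = card {i\<in>{1..m}. h i \<in> S}"
    unfolding bt by (metis (no_types, lifting) card_image inj inj_on_subset mem_Collect_eq subsetI)
  also have "real \<dots> = (\<Sum>i\<in>{i\<in>{1..m}. h i \<in> S}. 1)" by simp
  also have "\<dots> = Nr S q m \<sigma>" unfolding Nr_def h_def by (rule sum.inter_filter) simp
  finally show ?thesis .
qed

lemma Nr_bd: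
  assumes q: "q \<ge> 1" and s: "\<sigma> \<in> EE {1..q*m} {1..q*m}" and a: "a \<in> {1..q*m}" and b: "b \<in> {1..q*m}"
  shows "\<bar>Nr S q m (vsw {1..q*m} a b \<sigma>) - Nr S q m \<sigma>\<bar> \<le> 2"
proof -
  define P where "P = {1..q*m}"
  define \<sigma>' where "\<sigma>' = vsw P a b \<sigma>"
  have bij: "bij_betw \<sigma> P P" using s unfolding EE_def P_def by auto
  have "a \<in> \<sigma> ` P" "b \<in> \<sigma> ` P" using bij a b unfolding P_def bij_betw_def by auto
  then obtain u v where u: "u \<in> P" "\<sigma> u = a" and v: "v \<in> P" "\<sigma> v = b" by auto
  have same: "\<sigma>' x = \<sigma> x" if "x \<noteq> u" "x \<noteq> v" for x
  proof (cases "x \<in> P")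
    case True
    have "\<sigma> x \<noteq> a" "\<sigma> x \<noteq> b" using bij u v that True unfolding bij_betw_def by (metis inj_onD)+
    thus ?thesis unfolding \<sigma>'_def vsw_def sw_def using True by auto
  next
    case False
    thus ?thesis unfolding \<sigma>'_def vsw_def using s unfolding EE_def P_def by auto
  qed
  define d where "d i = (if map \<sigma>' (Bl q i) \<in> S then 1 else 0) - (if map \<sigma> (Bl q i) \<in> S then 1 else (0::real))" for i
  have "Nr S q m \<sigma>' - Nr S q m \<sigma> = (\<Sum>i\<in>{1..m}. d i)"
    unfolding Nr_def d_def by (simp add: sum_subtractf)
  moreover have "\<bar>\<Sum>i\<in>{1..m}. d i\<bar> \<le> 2"
  proof (rule sum_sparse[where x = "(u - 1) div q + 1" and y = "(v - 1) div q + 1"])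
    show "\<forall>i\<in>{1..m}. \<bar>d i\<bar> \<le> 1" unfolding d_def by auto
    show "\<forall>i\<in>{1..m}. d i \<noteq> 0 \<longrightarrow> i \<in> {(u - 1) div q + 1, (v - 1) div q + 1}"
    proof (intro ballI impI)
      fix i assume i: "i \<in> {1..m}" and "d i \<noteq> 0"
      have "map \<sigma>' (Bl q i) \<noteq> map \<sigma> (Bl q i)"
      proof
        assume eq: "map \<sigma>' (Bl q i) = map \<sigma> (Bl q i)"
        have "d i = 0" unfolding d_def by (simp only: eq)
        thus False using \<open>d i \<noteq> 0\<close> by simp
      qed
      then obtain k where k: "k \<in> set (Bl q i)" "\<sigma>' k \<noteq> \<sigma> k" using map_eq_conv by blast
      hence "k = u \<or> k = v" using same by blast
      moreover have "(k - 1) div q + 1 = i" using Bl_blk[OF q _ k(1)] i by auto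
      ultimately show "i \<in> {(u - 1) div q + 1, (v - 1) div q + 1}" by auto
    qed
  qed simp
  ultimately show ?thesis unfolding \<sigma>'_def P_def by simp
qed

lemma Nr_avg:
  assumes q: "q \<ge> 1" and S: "S \<subseteq> {xs. length xs = q \<and> distinct xs \<and> set xs \<subseteq> {1..q*m}}"
  shows "avg (EE {1..q*m} {1..q*m}) (Nr S q m) = m * card S * fact (q*m - q) / fact (q*m)"
proof -
  define P where "P = {1..q*m}"
  have finS: "finite S"
    by (rule finite_subset[OF _ finite_lists_length_eq[of P q]]) (use S in \<open>auto simp: P_def\<close>)
  have fE: "finite (EE P P)" using finite_EE by (auto simp: P_def)
  have inner: "(\<Sum>\<sigma>\<in>EE P P. if map \<sigma> (Bl q i) \<in> S then 1 else 0) = real (card S) * fact (q*m - q)"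
    if i: "i \<in> {1..m}" for i
  proof -
    have "(\<Sum>\<sigma>\<in>EE P P. if map \<sigma> (Bl q i) \<in> S then 1 else (0::real))
        = (\<Sum>\<sigma>\<in>EE P P. \<Sum>s\<in>S. if map \<sigma> (Bl q i) = s then 1 else 0)"
      by (rule sum.cong[OF refl]) (simp add: sum.delta'[OF finS])
    also have "\<dots> = (\<Sum>s\<in>S. \<Sum>\<sigma>\<in>EE P P. if map \<sigma> (Bl q i) = s then 1 else 0)"
      by (rule sum.swap)
    also have "\<dots> = (\<Sum>s\<in>S. real (fact (q*m - q)))"
    proof (rule sum.cong[OF refl])
      fix s assume sS: "s \<in> S"
      have "(\<Sum>\<sigma>\<in>EE P P. if map \<sigma> (Bl q i) = s then 1 else (0::real)) = (\<Sum>\<sigma>\<in>{\<sigma>\<in>EE P P. map \<sigma> (Bl q i) = s}. 1)"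
        by (rule sum.inter_filter[OF fE, symmetric])
      also have "\<dots> = card {\<sigma>\<in>EE P P. map \<sigma> (Bl q i) = s}" by simp
      also have "card {\<sigma>\<in>EE P P. map \<sigma> (Bl q i) = s} = fact (card P - length (Bl q i))"
        by (rule count_fix) (use S sS Bl_sub[OF q, of i m] Bl_len[of i q] i in \<open>auto simp: P_def Bl_def\<close>)
      also have "card P - length (Bl q i) = q*m - q" using Bl_len[of i q] i by (simp add: P_def)
      finally show "(\<Sum>\<sigma>\<in>EE P P. if map \<sigma> (Bl q i) = s then 1 else (0::real)) = real (fact (q*m - q))" .
    qed
    finally show ?thesis by simp
  qed
  have "avg (EE P P) (Nr S q m) = (\<Sum>i\<in>{1..m}. \<Sum>\<sigma>\<in>EE P P. if map \<sigma> (Bl q i) \<in> S then 1 else 0) / fact (q*m)"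
    unfolding avg_def Nr_def using card_EE[of P P] by (simp add: P_def sum.swap[of _ "EE _ _"])
  also have "\<dots> = m * card S * fact (q*m - q) / fact (q*m)"
    using inner by simp
  finally show ?thesis unfolding P_def .
qed

lemma fact_lower: "k \<le> n \<Longrightarrow> (n - k) ^ k * fact (n - k) \<le> (fact n :: nat)"
proof (induction k arbitrary: n)
  case 0 thus ?case by simp
next
  case (Suc k)
  then obtain n' where n: "n = Suc n'" by (cases n) auto
  have ih: "(n' - k) ^ k * fact (n' - k) \<le> (fact n' :: nat)" using Suc n by simp
  have "(n - Suc k) ^ Suc k * fact (n - Suc k) = (n' - k) * ((n' - k) ^ k * fact (n' - k))"
    using n by simp
  also have "\<dots> \<le> n * fact n'" using ih n by (intro mult_le_mono) auto
  also have "\<dots> = fact n" using n by simp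
  finally show ?case .
qed

lemma fact_upper: "k \<le> n \<Longrightarrow> (fact n :: nat) \<le> n ^ k * fact (n - k)"
proof (induction k arbitrary: n)
  case 0 thus ?case by simp
next
  case (Suc k)
  then obtain n' where n: "n = Suc n'" by (cases n) auto
  have ih: "(fact n' :: nat) \<le> n' ^ k * fact (n' - k)" using Suc n by simp
  have "fact n = n * fact n'" using n by simp
  also have "\<dots> \<le> n * (n' ^ k * fact (n' - k))" using ih by simp
  also have "\<dots> \<le> n * (n ^ k * fact (n' - k))" using n by (intro mult_le_mono power_mono) auto
  also have "\<dots> = n ^ Suc k * fact (n - Suc k)" using n by (simp add: algebra_simps)
  finally show ?case .
qed

lemma ratio_bound:
  assumes "q \<le> n" "2 * real q ^ 2 \<le> real n" "n > 0"
  shows "real n ^ q * fact (n - q) \<le> (1 + 2 * real q ^ 2 / n) * fact n"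
proof -
  have n0: "real n > 0" using assms(3) by simp
  define x where "x = real q / n"
  define y where "y = real q ^ 2 / n"
  have x0: "x \<ge> 0" unfolding x_def by simp
  have xq: "x * q = y" unfolding x_def y_def by (simp add: power2_eq_square)
  have y0: "y \<ge> 0" unfolding y_def by simp
  have y1: "y \<le> 1/2" unfolding y_def using assms(2) by (simp add: pos_divide_le_eq[OF n0])
  have "x \<le> 1" unfolding x_def using assms(1) by (simp add: pos_divide_le_eq[OF n0])
  hence "-1 \<le> - x" by simp
  hence bern: "1 + real q * (- x) \<le> (1 + (- x)) ^ q" by (rule Bernoulli_inequality)
  hence bern': "1 - y \<le> (1 - x) ^ q" using xq by (simp add: mult.commute)
  have "real n ^ q * (1 - y) \<le> real n ^ q * (1 - x) ^ q"
    using bern' by (intro mult_left_mono) auto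
  also have "real n ^ q * (1 - x) ^ q = (real n - q) ^ q"
  proof -
    have "real n * (1 - x) = real n - q" unfolding x_def using n0 by (simp add: right_diff_distrib)
    thus ?thesis by (metis power_mult_distrib)
  qed
  also have "\<dots> = real ((n - q) ^ q)" using assms(1) by (simp add: of_nat_diff)
  finally have A: "real n ^ q * (1 - y) \<le> real ((n - q) ^ q)" .
  have one: "1 \<le> (1 + 2 * y) * (1 - y)"
  proof -
    have "y * (1 - 2 * y) \<ge> 0" using y0 y1 by (intro mult_nonneg_nonneg) auto
    moreover have "(1 + 2 * y) * (1 - y) = 1 + y * (1 - 2 * y)" by (simp add: algebra_simps)
    ultimately show ?thesis by linarith
  qed
  have fpos: "real n ^ q * fact (n - q) \<ge> 0" by simp
  have "real n ^ q * fact (n - q) \<le> ((1 + 2 * y) * (1 - y)) * (real n ^ q * fact (n - q))"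
    using mult_right_mono[OF one fpos] by simp
  also have "\<dots> = (1 + 2 * y) * ((real n ^ q * (1 - y)) * fact (n - q))" by (simp add: algebra_simps)
  also have "\<dots> \<le> (1 + 2 * y) * (real ((n - q) ^ q) * fact (n - q))"
    using A y0 by (intro mult_left_mono mult_right_mono) auto
  also have "real ((n - q) ^ q) * fact (n - q) = real ((n - q) ^ q * fact (n - q))" by simp
  also have "(1 + 2 * y) * \<dots> \<le> (1 + 2 * y) * fact n"
  proof (rule mult_left_mono)
    have "real ((n - q) ^ q * fact (n - q)) \<le> real (fact n)"
      using fact_lower[OF assms(1)] by (simp only: of_nat_le_iff)
    thus "real ((n - q) ^ q * fact (n - q)) \<le> fact n" by simp
  qed (use y0 in simp)
  finally show ?thesis unfolding y_def by (simp add: times_divide_eq_right)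
qed

lemma pointwise:
  fixes q m :: nat and e K :: real and S :: "nat list set"
  assumes q: "q \<ge> 1" and e: "e > 0" and K: "K > 0"
    and S: "S \<subseteq> {xs. length xs = q \<and> distinct xs \<and> set xs \<subseteq> {1..q*m}}"
    and nbig: "real (q*m) \<ge> 16 * real q ^ 4 + 3"
    and D1: "e^2 * (real (card S))^2 / real (q*m) ^ (2*q-1) \<ge> 1"
    and DK: "e^2 * (real (card S))^2 / real (q*m) ^ (2*q-1) \<ge> 8 * real q^2 * K * ln (real (q*m))"
  shows "measure_pmf.prob (unif_perm (q * m))
            {\<sigma>. \<not> ((1 - e) * (real (card S) / (real q * real (q * m) ^ (q - 1)))
                       \<le> real (card (S \<inter> block_tuples q (q * m) \<sigma>)) \<and>
                     real (card (S \<inter> block_tuples q (q * m) \<sigma>))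
                       \<le> (1 + e) * (real (card S) / (real q * real (q * m) ^ (q - 1))))}
         \<le> 2 * real (q*m) powr (-K)"
proof -
  define n where "n = q * m"
  note nd = n_def[symmetric]
  define P where "P = {1..n}"
  define E where "E = EE P P"
  define s where "s = real (card S)"
  define M where "M = s / (real q * real n ^ (q - 1))"
  define D where "D = e^2 * s^2 / real n ^ (2*q-1)"
  define \<mu> where "\<mu> = avg E (Nr S q m)"
  have q4: "real q ^ 4 \<ge> real q ^ 2" using q by (intro power_increasing) auto
  have q2: "real q ^ 2 \<ge> real q" using q by (simp add: power2_eq_square)
  have nr: "real n \<ge> 16 * real q ^ 4 + 3" using nbig unfolding n_def .
  have q40: "real q ^ 4 \<ge> 0" by simp
  have n0: "real n > 0" using nr q40 by linarith
  have "real q \<le> real n" using nr q4 q2 q40 by linarith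
  hence nq: "q \<le> n" by simp
  have n2q: "2 * real q ^ 2 \<le> real n" using nr q4 q2 by linarith
  have "n > 0" using n0 by simp
  hence m0: "m > 0" unfolding n_def by simp
  have perm: "{\<sigma>. \<sigma> permutes P} = E"
    unfolding E_def EE_def using permutes_imp_bij permutes_not_in bij_imp_permutes by fastforce
  have fE: "finite E" unfolding E_def P_def using finite_EE by auto
  have cE: "card E = fact n" unfolding E_def P_def using card_EE[of "{1..n}" "{1..n}"] by simp
  have Ene: "E \<noteq> {}" using cE fE by auto
  have prob: "measure_pmf.prob (unif_perm n) B = real (card (E \<inter> B)) / real (card E)" for B
    unfolding unif_perm_def P_def[symmetric] perm using fE Ene by (simp add: measure_pmf_of_set)
  have Ssub: "S \<subseteq> {xs. set xs \<subseteq> P \<and> length xs = q}" using S unfolding P_def n_def by auto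
  have "card S \<le> card {xs. set xs \<subseteq> P \<and> length xs = q}"
    by (rule card_mono[OF _ Ssub]) (simp add: P_def finite_lists_length_eq)
  hence "card S \<le> n ^ q" unfolding P_def by (simp add: card_lists_length_eq)
  hence sn: "s \<le> real n ^ q" unfolding s_def by (metis of_nat_le_iff of_nat_power)
  have s0: "s \<ge> 0" unfolding s_def by simp
  have D1': "D \<ge> 1" using D1 unfolding D_def s_def n_def .
  have DK': "D \<ge> 8 * real q^2 * K * ln (real n)" using DK unfolding D_def s_def n_def .
  have pw: "real n ^ (2*q) = real n ^ (2*q-1) * real n" using q
    by (metis Suc_diff_1 le_eq_less_or_eq less_le_trans mult_pos_pos nat_0_less_mult_iff
        power_Suc2 zero_less_numeral zero_less_one)
  have "s^2 \<le> (real n ^ q)^2" using sn s0 by (intro power_mono) auto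
  also have "\<dots> = real n ^ (2*q-1) * real n" using pw by (simp add: power_mult[symmetric] mult.commute)
  finally have s2: "s^2 \<le> real n ^ (2*q-1) * real n" .
  have npos: "real n ^ (2*q-1) > 0" using n0 by simp
  have "D \<le> e^2 * real n"
  proof -
    have "D = e^2 * (s^2 / real n ^ (2*q-1))" unfolding D_def by simp
    also have "s^2 / real n ^ (2*q-1) \<le> real n" using s2 npos by (simp add: pos_divide_le_eq mult.commute)
    hence "e^2 * (s^2 / real n ^ (2*q-1)) \<le> e^2 * real n" by (intro mult_left_mono) auto
    finally show ?thesis .
  qed
  hence en1: "e^2 * real n \<ge> 1" using D1' by linarith
  have en: "e * real n \<ge> 4 * real q ^ 2"
  proof (rule power2_le_imp_le)
    have "(4 * real q ^ 2)^2 = 16 * real q ^ 4" by (simp add: power2_eq_square power4_eq_xxxx)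
    also have "\<dots> \<le> real n" using nr by simp
    also have "\<dots> \<le> (e^2 * real n) * real n" using en1 n0 by (simp add: mult_le_cancel_right1)
    also have "\<dots> = (e * real n)^2" by (simp add: power2_eq_square)
    finally show "(4 * real q ^ 2)^2 \<le> (e * real n)^2" .
  qed (use e n0 in simp)
  have s_pos: "s > 0"
  proof (rule ccontr)
    assume "\<not> s > 0" hence "s = 0" using s0 by simp
    hence "D = 0" unfolding D_def using q by simp
    thus False using D1' by simp
  qed
  have pnq: "real n ^ q = real q * real m * real n ^ (q - 1)"
    using q unfolding n_def by (metis Suc_diff_1 less_le_trans of_nat_mult power_Suc zero_less_one mult.assoc)
  have M_eq: "M = real m * s / real n ^ q"
    unfolding M_def pnq using m0 by (simp add: field_simps)
  have M0: "M > 0" unfolding M_eq using s_pos m0 n0 by simp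
  have mu_eq: "\<mu> = real m * s * fact (n - q) / fact n"
    unfolding \<mu>_def E_def P_def s_def n_def using Nr_avg[OF q] S by simp
  have fn0: "(fact n :: real) > 0" by simp
  have mu_M: "\<mu> = M * (real n ^ q * fact (n - q) / fact n)"
    unfolding mu_eq M_eq using n0 by (simp add: field_simps)
  have r1: "real n ^ q * fact (n - q) / fact n \<ge> 1"
  proof -
    have "real (fact n) \<le> real (n ^ q * fact (n - q))" using fact_upper[OF nq] by (simp only: of_nat_le_iff)
    thus ?thesis using fn0 by simp
  qed
  have r2: "real n ^ q * fact (n - q) / fact n \<le> 1 + e / 2"
  proof -
    have "2 * real q ^ 2 / real n \<le> e / 2" using en n0 by (simp add: pos_divide_le_eq field_simps)
    hence "(1 + 2 * real q ^ 2 / real n) * fact n \<le> (1 + e / 2) * fact n"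
      by (intro mult_right_mono) auto
    hence "real n ^ q * fact (n - q) \<le> (1 + e / 2) * fact n"
      using ratio_bound[OF nq n2q \<open>n > 0\<close>] by linarith
    thus ?thesis using fn0 by (simp add: pos_divide_le_eq)
  qed
  have muL: "M \<le> \<mu>"
  proof -
    have "M * 1 \<le> M * (real n ^ q * fact (n - q) / fact n)" using M0 r1 by (intro mult_left_mono) auto
    thus ?thesis unfolding mu_M by simp
  qed
  have muU: "\<mu> \<le> M * (1 + e / 2)"
    unfolding mu_M using M0 r2 by (intro mult_left_mono) auto
  define t where "t = e * M / 2"
  have t0: "t > 0" unfolding t_def using e M0 by simp
  define bad where "bad = {\<sigma>. \<not> ((1 - e) * M \<le> real (card (S \<inter> block_tuples q n \<sigma>)) \<and>
                     real (card (S \<inter> block_tuples q n \<sigma>)) \<le> (1 + e) * M)}"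
  have sub: "E \<inter> bad \<subseteq> {\<sigma>\<in>EE P P. \<bar>Nr S q m \<sigma> - avg (EE P P) (Nr S q m)\<bar> \<ge> t}"
  proof
    fix \<sigma> assume "\<sigma> \<in> E \<inter> bad"
    hence sE: "\<sigma> \<in> E" and b: "\<not> ((1 - e) * M \<le> real (card (S \<inter> block_tuples q n \<sigma>)) \<and>
                     real (card (S \<inter> block_tuples q n \<sigma>)) \<le> (1 + e) * M)" unfolding bad_def by auto
    have Neq: "real (card (S \<inter> block_tuples q n \<sigma>)) = Nr S q m \<sigma>"
      using N_eq[OF q, of \<sigma> m S] sE unfolding E_def P_def n_def by simp
    have "\<bar>Nr S q m \<sigma> - \<mu>\<bar> \<ge> t"
      using b muL muU unfolding Neq t_def by (auto simp: algebra_simps)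
    thus "\<sigma> \<in> {\<sigma>\<in>EE P P. \<bar>Nr S q m \<sigma> - avg (EE P P) (Nr S q m)\<bar> \<ge> t}"
      using sE unfolding E_def \<mu>_def by simp
  qed
  have bd: "\<forall>\<sigma>\<in>EE P P. \<forall>a\<in>P. \<forall>b\<in>P. \<bar>Nr S q m (vsw P a b \<sigma>) - Nr S q m \<sigma>\<bar> \<le> 2"
    unfolding P_def n_def using Nr_bd[OF q] by blast
  have "real (card (E \<inter> bad)) / real (card E)
      \<le> real (card {\<sigma>\<in>EE P P. \<bar>Nr S q m \<sigma> - avg (EE P P) (Nr S q m)\<bar> \<ge> t}) / real (card (EE P P))"
    unfolding E_def[symmetric]
    by (intro divide_right_mono of_nat_mono card_mono) (use sub fE in \<open>auto simp: E_def\<close>)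
  also have "\<dots> \<le> 2 * exp (- 2 * t^2 / ((2::real)^2 * real (card P)))"
    by (rule tail_two) (use bd t0 n0 in \<open>auto simp: P_def\<close>)
  also have "- 2 * t^2 / ((2::real)^2 * real (card P)) = - (D / (8 * real q ^ 2))"
  proof -
    have cP: "real (card P) = real n" unfolding P_def by simp
    have pw2: "real n ^ (2*q-1) = (real n ^ (q - 1))^2 * real n"
    proof -
      have "2*q-1 = (q-1)*2 + 1" using q by simp
      hence "real n ^ (2*q-1) = real n ^ ((q-1)*2) * real n" by (simp add: power_add)
      also have "real n ^ ((q-1)*2) = (real n ^ (q - 1))^2" by (rule power_mult)
      finally show ?thesis .
    qed
    show ?thesis unfolding cP t_def M_def D_def pw2 using n0 q
      by (simp add: field_simps power2_eq_square)
  qed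
  also have "2 * exp (- (D / (8 * real q ^ 2))) \<le> 2 * exp (- (K * ln (real n)))"
  proof -
    have "D / (8 * real q ^ 2) \<ge> K * ln (real n)" using DK' q by (simp add: pos_le_divide_eq mult.commute mult.left_commute)
    thus ?thesis by simp
  qed
  also have "exp (- (K * ln (real n))) = real n powr (- K)" using n0 by (simp add: powr_def)
  finally have fin: "real (card (E \<inter> bad)) / real (card E) \<le> 2 * real n powr (- K)" .
  show ?thesis unfolding nd M_def[symmetric] s_def[symmetric] using fin prob[of bad] unfolding bad_def s_def M_def
    by simp
qed

theorem lemma3:
  fixes q :: nat and \<epsilon> :: "nat \<Rightarrow> real" and S :: "nat \<Rightarrow> nat list set"
  assumes q_pos: "q \<ge> 1"
    and eps_pos: "\<And>n. \<epsilon> n > 0"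
    and S_tuples: "\<And>n. S n \<subseteq> {xs. length xs = q \<and> distinct xs \<and> set xs \<subseteq> {1..n}}"
    and growth: "filterlim (\<lambda>m. (\<epsilon> (q * m))\<^sup>2 * (real (card (S (q * m))))\<^sup>2
                     / real (q * m) ^ (2 * q - 1) / ln (real (q * m))) at_top sequentially"
  shows "\<forall>K > 0. (\<lambda>m. measure_pmf.prob (unif_perm (q * m))
            {\<sigma>. \<not> ((1 - \<epsilon> (q * m)) * (real (card (S (q * m))) / (real q * real (q * m) ^ (q - 1)))
                       \<le> real (card (S (q * m) \<inter> block_tuples q (q * m) \<sigma>)) \<and>
                     real (card (S (q * m) \<inter> block_tuples q (q * m) \<sigma>))
                       \<le> (1 + \<epsilon> (q * m)) * (real (card (S (q * m))) / (real q * real (q * m) ^ (q - 1))))})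
          \<in> O(\<lambda>m. real (q * m) powr (- K))"
proof (intro allI impI)
  fix K :: real assume K: "K > 0"
  define G where "G m = (\<epsilon> (q * m))\<^sup>2 * (real (card (S (q * m))))\<^sup>2
                     / real (q * m) ^ (2 * q - 1) / ln (real (q * m))" for m
  have ev1: "eventually (\<lambda>m. G m \<ge> 8 * real q^2 * K + 1) sequentially"
    using growth unfolding G_def[symmetric] filterlim_at_top by blast
  have ev2: "eventually (\<lambda>m. real m \<ge> 16 * real q ^ 4 + 3) sequentially"
    using eventually_ge_at_top[of "nat \<lceil>16 * real q ^ 4 + 3\<rceil>"]
    by eventually_elim linarith
  show "(\<lambda>m. measure_pmf.prob (unif_perm (q * m))
            {\<sigma>. \<not> ((1 - \<epsilon> (q * m)) * (real (card (S (q * m))) / (real q * real (q * m) ^ (q - 1)))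
                       \<le> real (card (S (q * m) \<inter> block_tuples q (q * m) \<sigma>)) \<and>
                     real (card (S (q * m) \<inter> block_tuples q (q * m) \<sigma>))
                       \<le> (1 + \<epsilon> (q * m)) * (real (card (S (q * m))) / (real q * real (q * m) ^ (q - 1))))})
          \<in> O(\<lambda>m. real (q * m) powr (- K))"
  proof (rule bigoI[where c = 2])
    show "\<forall>\<^sub>F m in sequentially. norm (measure_pmf.prob (unif_perm (q * m))
            {\<sigma>. \<not> ((1 - \<epsilon> (q * m)) * (real (card (S (q * m))) / (real q * real (q * m) ^ (q - 1)))
                       \<le> real (card (S (q * m) \<inter> block_tuples q (q * m) \<sigma>)) \<and>
                     real (card (S (q * m) \<inter> block_tuples q (q * m) \<sigma>))
                       \<le> (1 + \<epsilon> (q * m)) * (real (card (S (q * m))) / (real q * real (q * m) ^ (q - 1))))})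
          \<le> 2 * norm (real (q * m) powr (- K))"
      using ev1 ev2
    proof eventually_elim
      case (elim m)
      define n where "n = q * m"
      have "m \<le> n" unfolding n_def using q_pos by simp
      hence "real m \<le> real n" by simp
      hence nbig: "real n \<ge> 16 * real q ^ 4 + 3" using elim(2) by linarith
      have q40: "real q ^ 4 \<ge> 0" by simp
      have n3: "real n \<ge> 3" using nbig q40 by linarith
      have ln1: "ln (real n) \<ge> 1" using n3 exp_le by (subst ln_ge_iff) auto
      define D where "D = (\<epsilon> n)\<^sup>2 * (real (card (S n)))\<^sup>2 / real n ^ (2 * q - 1)"
      have GD: "G m = D / ln (real n)" unfolding G_def D_def n_def ..
      have "D = G m * ln (real n)" unfolding GD using ln1 by simp
      moreover have "G m * ln (real n) \<ge> (8 * real q^2 * K + 1) * ln (real n)"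
        using elim(1) ln1 by (intro mult_right_mono) auto
      ultimately have Dge: "D \<ge> (8 * real q^2 * K + 1) * ln (real n)" by simp
      have qK: "8 * real q^2 * K \<ge> 0" using K by simp
      have dd: "(8 * real q^2 * K + 1) * ln (real n) = 8 * real q^2 * K * ln (real n) + ln (real n)"
        by (simp add: distrib_right)
      have "8 * real q^2 * K * ln (real n) \<ge> 0" using qK ln1 by (intro mult_nonneg_nonneg) (use K in auto)
      hence D1: "D \<ge> 1" and DK: "D \<ge> 8 * real q^2 * K * ln (real n)" using Dge ln1 dd by linarith+
      have pb: "measure_pmf.prob (unif_perm (q * m))
            {\<sigma>. \<not> ((1 - \<epsilon> (q * m)) * (real (card (S (q * m))) / (real q * real (q * m) ^ (q - 1)))
                       \<le> real (card (S (q * m) \<inter> block_tuples q (q * m) \<sigma>)) \<and>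
                     real (card (S (q * m) \<inter> block_tuples q (q * m) \<sigma>))
                       \<le> (1 + \<epsilon> (q * m)) * (real (card (S (q * m))) / (real q * real (q * m) ^ (q - 1))))}
            \<le> 2 * real (q*m) powr (-K)"
        by (rule pointwise[OF q_pos eps_pos K S_tuples])
           (use nbig D1 DK in \<open>simp_all add: n_def D_def\<close>)
      thus ?case by simp
    qed
  qed
qed

end
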